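(* Let $\alpha>0$ and $T^{(1)}_\lambda(\alpha,\Delta t)=(1-\alpha\Delta t\lambda)^{-1}$. The explicit Euler time integration of $dy/dt=T^{(1)}_\lambda(\alpha,\Delta t)\lambda y$, namely $y^{n+1}=y^n+\Delta t\,T^{(1)}_\lambda(\alpha,\Delta t)\lambda y^n$, is unconditionally stable, i.e. $|y^n+\Delta t\,T^{(1)}_\lambda(\alpha,\Delta t)\lambda y^n|\leq|y^n|$ for all $\Delta t>0$, all $\lambda\in\mathbb{C}$ with $\mathrm{Re}(\lambda)\leq 0$ and all $y^n\in\mathbb{C}$, if and only if $\alpha\geq 0.5$. *)

theory Defs
  imports Complex_Main
begin

definition T1 :: "real \<Rightarrow> real \<Rightarrow> complex \<Rightarrow> complex" where
  "T1 a dt lam = inverse (1 - complex_of_real (a * dt) * lam)"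

end

theory Submission
  imports Defs
begin

lemma key:
  fixes a dt :: real and lam :: complex
  assumes a: "a > 0" and dt: "dt > 0" and re: "Re lam \<le> 0"
  shows "cmod (1 + complex_of_real dt * T1 a dt lam * lam) \<le> 1 \<longleftrightarrow>
         0 \<le> -2 * (dt * Re lam) + (2*a-1) * ((dt * Re lam)^2 + (dt * Im lam)^2)"
proof -
  define z where "z = complex_of_real dt * lam"
  have rz: "Re z = dt * Re lam" "Im z = dt * Im lam" by (simp_all add: z_def)
  have "Re z \<le> 0" using rz dt re by (simp add: mult_nonneg_nonpos)
  define v where "v = 1 - complex_of_real a * z"
  have rv: "Re v = 1 - a * Re z" "Im v = - a * Im z" by (simp_all add: v_def)
  have "Re v \<ge> 1" using rv \<open>Re z \<le> 0\<close> a by (simp add: mult_nonneg_nonpos)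
  hence v0: "v \<noteq> 0" by auto
  have T: "T1 a dt lam = inverse v" by (simp add: T1_def v_def z_def mult.assoc)
  have "1 + complex_of_real dt * T1 a dt lam * lam = (v + z) / v"
    using v0 by (simp add: T z_def field_simps)
  hence "cmod (1 + complex_of_real dt * T1 a dt lam * lam) \<le> 1 \<longleftrightarrow> cmod (v + z) \<le> cmod v"
    using v0 by (simp add: norm_divide divide_le_eq_1)
  also have "\<dots> \<longleftrightarrow> (cmod (v+z))^2 \<le> (cmod v)^2"
    by (simp add: power_mono_iff)
  also have "\<dots> \<longleftrightarrow> (Re v + Re z)^2 + (Im v + Im z)^2 \<le> (Re v)^2 + (Im v)^2"
    by (simp add: cmod_power2)
  also have "\<dots> \<longleftrightarrow> 0 \<le> -2 * Re z + (2*a-1) * ((Re z)^2 + (Im z)^2)"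
    unfolding rv by (simp add: power2_eq_square algebra_simps)
  finally show ?thesis unfolding rz .
qed

theorem lemma1:
  fixes a :: real
  assumes "a > 0"
  shows "(\<forall>dt::real. dt > 0 \<longrightarrow> (\<forall>lam::complex. Re lam \<le> 0 \<longrightarrow>
            (\<forall>y::complex. cmod (y + complex_of_real dt * T1 a dt lam * lam * y) \<le> cmod y)))
         \<longleftrightarrow> a \<ge> 1/2"
proof
  assume H: "\<forall>dt::real. dt > 0 \<longrightarrow> (\<forall>lam::complex. Re lam \<le> 0 \<longrightarrow>
            (\<forall>y::complex. cmod (y + complex_of_real dt * T1 a dt lam * lam * y) \<le> cmod y))"
  have "cmod (1 + complex_of_real 1 * T1 a 1 \<i> * \<i> * 1) \<le> cmod 1"
  proof -
    have "Re \<i> \<le> 0" by simp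
    moreover have "(1::real) > 0" by simp
    ultimately show ?thesis using H by blast
  qed
  hence "cmod (1 + complex_of_real 1 * T1 a 1 \<i> * \<i>) \<le> 1" by simp
  hence "0 \<le> -2 * (1 * Re \<i>) + (2*a-1) * ((1 * Re \<i>)^2 + (1 * Im \<i>)^2)"
    using key[of a 1 \<i>] assms by simp
  thus "a \<ge> 1/2" by simp
next
  assume ah: "a \<ge> 1/2"
  show "\<forall>dt::real. dt > 0 \<longrightarrow> (\<forall>lam::complex. Re lam \<le> 0 \<longrightarrow>
            (\<forall>y::complex. cmod (y + complex_of_real dt * T1 a dt lam * lam * y) \<le> cmod y))"
  proof (intro allI impI)
    fix dt :: real and lam y :: complex
    assume dt: "dt > 0" and re: "Re lam \<le> 0"
    have "dt * Re lam \<le> 0" using dt re by (simp add: mult_nonneg_nonpos)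
    moreover have "0 \<le> (2*a-1) * ((dt * Re lam)^2 + (dt * Im lam)^2)"
      using ah by simp
    ultimately have "cmod (1 + complex_of_real dt * T1 a dt lam * lam) \<le> 1"
      using key[OF assms dt re] by linarith
    hence "cmod y * cmod (1 + complex_of_real dt * T1 a dt lam * lam) \<le> cmod y"
      by (simp add: mult_left_le)
    moreover have "y + complex_of_real dt * T1 a dt lam * lam * y
        = y * (1 + complex_of_real dt * T1 a dt lam * lam)" by (simp add: algebra_simps)
    ultimately show "cmod (y + complex_of_real dt * T1 a dt lam * lam * y) \<le> cmod y"
      by (simp add: norm_mult)
  qed
qed

end
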